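(* In the setting of the context, fix $n\in\{0,1,\dots,T/\tau-1\}$ and suppose the MTI-FA iterates satisfy $|y^n|\le C_0+1$ and $|\dot y^n|\le (C_0+1)/\varepsilon^2$. Let $\tilde y^n$ solve $\varepsilon^2\ddot{\tilde y}^n(s)+(\alpha+\varepsilon^{-2})\tilde y^n(s)+g(|\tilde y^n(s)|^2)\tilde y^n(s)=0$ for $s>0$, $\tilde y^n(0)=y^n$, $\dot{\tilde y}^n(0)=\dot y^n$, and set $\eta^n(s)=y(t_n+s)-\tilde y^n(s)$, $\dot\eta^n(s)=\dot y(t_n+s)-\dot{\tilde y}^n(s)$, $e^n=y(t_n)-y^n$, $\dot e^n=\dot y(t_n)-\dot y^n$. Then $$\mathcal E(\eta^n(\tau),\dot\eta^n(\tau))-\mathcal E(e^n,\dot e^n)\lesssim\tau\,\mathcal E(e^n,\dot e^n),\qquad 0\le\tau\le\tau_1,$$ where $\tau_1=(2C_0+4)^{-1}K_1^{-1}$ with $K_1=\|g\|_{L^\infty(0,(2C_0+4)^2)}$, and $\mathcal E(e,\dot e)=\varepsilon^2|\dot e|^2+(\alpha+\varepsilon^{-2})|e|^2$ for $e,\dot e\in\mathbb{C}$.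
   Context: Setting. Let $0<\varepsilon\le1$, $\alpha\ge0$, $\lambda\in\mathbb{R}$, $p\in\mathbb{N}_0=\{0,1,2,\dots\}$, $g(\rho)=\lambda\rho^p$ and $f(y)=g(|y|^2)y$ for $y\in\mathbb{C}$. Let $\phi_1,\phi_2\in\mathbb{C}$ (independent of $\varepsilon$) and let $y(t)\in\mathbb{C}$ solve $\varepsilon^2\ddot y+(\alpha+\varepsilon^{-2})y+f(y)=0$ for $t>0$, $y(0)=\phi_1$, $\dot y(0)=\phi_2/\varepsilon^2$. Let $T^*$ be the maximal existence time, fix $0<T<T^*$, and assume $y\in C^2(0,T)$ with $\|\frac{d^m}{dt^m}y\|_{L^\infty(0,T)}\lesssim\varepsilon^{-2m}$ for $m=0,1,2$. Set $C_0=\max\{\|y\|_{L^\infty(0,T)},\varepsilon^2\|\dot y\|_{L^\infty(0,T)},\varepsilon^4\|\ddot y\|_{L^\infty(0,T)}\}$. $A\lesssim B$ means $|A|\le CB$ for a generic constant $C>0$ independent of $\tau$ (or $n$) and $\varepsilon$. $\tau>0$ is the time step, $t_n=n\tau$, $\bar z$ denotes complex conjugation, $\omega=\sqrt{1+\varepsilon^2\alpha}/\varepsilon^2$. The iterates $(y^n,\dot y^n)$ are those of the scheme MTI-FA: For $k=0,\dots,p$ let $\langle p_1,p_2,p_3\rangle_k$ be the set of $(p_1,p_2,p_3)\in\mathbb{N}_0^3$ with $p_1+2p_2+p_3=p-k$, $p_3\in\{0,1\}$; $g_\pm(\rho_+,\rho_-)=\sum_{\langle p_1,p_2,p_3\rangle_0}\lambda(\rho_++\rho_-)^{p_1}(\rho_+\rho_-)^{p_2}(\rho_\mp)^{p_3}$;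 for $k=1,\dots,p$, $g_k(z_+,z_-)=\lambda z_+^{k+1}z_-^{k}\sum_{\langle p_1,p_2,p_3\rangle_k}(|z_+|^2+|z_-|^2)^{p_1}|z_+|^{2p_2}|z_-|^{2p_2+2p_3}$, $P_k=\int_0^\tau\frac{\sin(\omega(\tau-\theta))}{\varepsilon^2\omega}e^{i(2k+1)\theta/\varepsilon^2}d\theta$, $Q_k=\int_0^\tau\frac{\sin(\omega(\tau-\theta))}{\varepsilon^2\omega}e^{i(2k+1)\theta/\varepsilon^2}\theta\,d\theta$, $\dot P_k=\int_0^\tau\frac{\cos(\omega(\tau-\theta))}{\varepsilon^2}e^{i(2k+1)\theta/\varepsilon^2}d\theta$, $\dot Q_k=\int_0^\tau\frac{\cos(\omega(\tau-\theta))}{\varepsilon^2}e^{i(2k+1)\theta/\varepsilon^2}\theta\,d\theta$ (empty sums if $p=0$). Set $y^0=\phi_1$, $\dot y^0=\phi_2/\varepsilon^2$; given $(y^n,\dot y^n)$ let $z_+^{(0)}=\frac{y^n-i\varepsilon^2\dot y^n}{2}$, $z_-^{(0)}=\frac{\overline{y^n}-i\varepsilon^2\overline{\dot y^n}}{2}$, $\mu_\pm=\frac12g_\pm(|z_+^{(0)}|^2,|z_-^{(0)}|^2)+\frac\alpha2$, $\dot z_\pm^{(0)}=i\mu_\pm z_\pm^{(0)}$, $\dot r^{(0)}=-\dot z_+^{(0)}-\overline{\dot z_-^{(0)}}$, $u^{(0)}=-\mu_+^2z_+^{(0)}-\mu_-^2\overline{z_-^{(0)}}$, $g_{k,\pm}^{(0)}=g_k(z_\pm^{(0)},z_\mp^{(0)})$,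 $\dot g_{k,\pm}^{(0)}=\frac{d}{ds}g_k(Z_\pm(s),Z_\mp(s))|_{s=0}$ with $Z_\pm(s)=e^{i\mu_\pm s}z_\pm^{(0)}$; $z_\pm^{n+1}=e^{i\mu_\pm\tau}z_\pm^{(0)}$, $\dot z_\pm^{n+1}=i\mu_\pm z_\pm^{n+1}$, $\ddot z_\pm^{n+1}=-\mu_\pm^2z_\pm^{n+1}$, $r^{n+1}=\frac{\sin(\omega\tau)}{\omega}(\dot r^{(0)}-\frac\tau2u^{(0)})-\sum_{k=1}^p[P_kg_{k,+}^{(0)}+Q_k\dot g_{k,+}^{(0)}+\overline{P_kg_{k,-}^{(0)}}+\overline{Q_k\dot g_{k,-}^{(0)}}]$, $y^{n+1}=e^{i\tau/\varepsilon^2}z_+^{n+1}+e^{-i\tau/\varepsilon^2}\overline{z_-^{n+1}}+r^{n+1}$, $u^{n+1}=e^{i\tau/\varepsilon^2}\ddot z_+^{n+1}+e^{-i\tau/\varepsilon^2}\overline{\ddot z_-^{n+1}}$, $h^{n+1}=g(|y^{n+1}|^2)y^{n+1}-g(|y^{n+1}-r^{n+1}|^2)(y^{n+1}-r^{n+1})$, $\dot r^{n+1}=-\sum_{k=1}^p[\dot P_kg_{k,+}^{(0)}+\dot Q_k\dot g_{k,+}^{(0)}+\overline{\dot P_kg_{k,-}^{(0)}}+\overline{\dot Q_k\dot g_{k,-}^{(0)}}]+\cos(\omega\tau)(\dot r^{(0)}-\frac\tau2u^{(0)})-\frac\tau2(\frac{h^{n+1}}{\varepsilon^2}+u^{n+1})$,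 $\dot y^{n+1}=e^{i\tau/\varepsilon^2}(\dot z_+^{n+1}+\frac{i}{\varepsilon^2}z_+^{n+1})+e^{-i\tau/\varepsilon^2}(\overline{\dot z_-^{n+1}}-\frac{i}{\varepsilon^2}\overline{z_-^{n+1}})+\dot r^{n+1}$. *)

theory Defs
  imports "HOL-Analysis.Analysis"
begin

definition gnl :: "real \<Rightarrow> nat \<Rightarrow> real \<Rightarrow> real" where
  "gnl lam p \<rho> = lam * \<rho> ^ p"

definition fnl :: "real \<Rightarrow> nat \<Rightarrow> complex \<Rightarrow> complex" where
  "fnl lam p z = complex_of_real (gnl lam p ((cmod z)\<^sup>2)) * z"

definition idx :: "nat \<Rightarrow> nat \<Rightarrow> (nat \<times> nat \<times> nat) set" where
  "idx p k = {(p1, p2, p3). p1 + 2 * p2 + p3 = p - k \<and> p3 \<in> {0, 1}}"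

text \<open>g_+ (sel = True) and g_- (sel = False).\<close>
definition gpm :: "bool \<Rightarrow> real \<Rightarrow> nat \<Rightarrow> real \<Rightarrow> real \<Rightarrow> real" where
  "gpm sel lam p rp rm =
     (\<Sum>(p1, p2, p3)\<in>idx p 0. lam * (rp + rm) ^ p1 * (rp * rm) ^ p2 * (if sel then rm else rp) ^ p3)"

definition gk :: "real \<Rightarrow> nat \<Rightarrow> nat \<Rightarrow> complex \<Rightarrow> complex \<Rightarrow> complex" where
  "gk lam p k zp zm =
     complex_of_real lam * zp ^ (k + 1) * zm ^ k *
     (\<Sum>(p1, p2, p3)\<in>idx p k.
        complex_of_real (((cmod zp)\<^sup>2 + (cmod zm)\<^sup>2) ^ p1 * cmod zp ^ (2 * p2) * cmod zm ^ (2 * p2 + 2 * p3)))"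

definition omg :: "real \<Rightarrow> real \<Rightarrow> real" where
  "omg eps \<alpha> = sqrt (1 + eps\<^sup>2 * \<alpha>) / eps\<^sup>2"

definition eix :: "real \<Rightarrow> complex" where
  "eix x = exp (\<i> * complex_of_real x)"

definition Pk :: "real \<Rightarrow> real \<Rightarrow> real \<Rightarrow> nat \<Rightarrow> complex" where
  "Pk eps \<alpha> \<tau> k = integral {0..\<tau>} (\<lambda>\<theta>.
     complex_of_real (sin (omg eps \<alpha> * (\<tau> - \<theta>)) / (eps\<^sup>2 * omg eps \<alpha>)) * eix ((2 * real k + 1) * \<theta> / eps\<^sup>2))"

definition Qk :: "real \<Rightarrow> real \<Rightarrow> real \<Rightarrow> nat \<Rightarrow> complex" where
  "Qk eps \<alpha> \<tau> k = integral {0..\<tau>} (\<lambda>\<theta>.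
     complex_of_real (sin (omg eps \<alpha> * (\<tau> - \<theta>)) / (eps\<^sup>2 * omg eps \<alpha>)) * eix ((2 * real k + 1) * \<theta> / eps\<^sup>2)
     * complex_of_real \<theta>)"

definition dPk :: "real \<Rightarrow> real \<Rightarrow> real \<Rightarrow> nat \<Rightarrow> complex" where
  "dPk eps \<alpha> \<tau> k = integral {0..\<tau>} (\<lambda>\<theta>.
     complex_of_real (cos (omg eps \<alpha> * (\<tau> - \<theta>)) / eps\<^sup>2) * eix ((2 * real k + 1) * \<theta> / eps\<^sup>2))"

definition dQk :: "real \<Rightarrow> real \<Rightarrow> real \<Rightarrow> nat \<Rightarrow> complex" where
  "dQk eps \<alpha> \<tau> k = integral {0..\<tau>} (\<lambda>\<theta>.
     complex_of_real (cos (omg eps \<alpha> * (\<tau> - \<theta>)) / eps\<^sup>2) * eix ((2 * real k + 1) * \<theta> / eps\<^sup>2)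
     * complex_of_real \<theta>)"

definition mti_step :: "real \<Rightarrow> real \<Rightarrow> real \<Rightarrow> nat \<Rightarrow> real \<Rightarrow> complex \<times> complex \<Rightarrow> complex \<times> complex" where
  "mti_step eps \<alpha> lam p \<tau> yy = (
     let yn = fst yy; ydn = snd yy;
         \<omega> = omg eps \<alpha>;
         e2 = complex_of_real (eps\<^sup>2);
         zp0 = (yn - \<i> * e2 * ydn) / 2;
         zm0 = (cnj yn - \<i> * e2 * cnj ydn) / 2;
         mup = gpm True lam p ((cmod zp0)\<^sup>2) ((cmod zm0)\<^sup>2) / 2 + \<alpha> / 2;
         mum = gpm False lam p ((cmod zp0)\<^sup>2) ((cmod zm0)\<^sup>2) / 2 + \<alpha> / 2;
         dzp0 = \<i> * complex_of_real mup * zp0;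
         dzm0 = \<i> * complex_of_real mum * zm0;
         dr0 = - dzp0 - cnj dzm0;
         u0 = - complex_of_real (mup\<^sup>2) * zp0 - complex_of_real (mum\<^sup>2) * cnj zm0;
         gp = (\<lambda>k. gk lam p k zp0 zm0);
         gm = (\<lambda>k. gk lam p k zm0 zp0);
         dgp = (\<lambda>k. vector_derivative (\<lambda>s. gk lam p k (eix (mup * s) * zp0) (eix (mum * s) * zm0)) (at 0));
         dgm = (\<lambda>k. vector_derivative (\<lambda>s. gk lam p k (eix (mum * s) * zm0) (eix (mup * s) * zp0)) (at 0));
         zp1 = eix (mup * \<tau>) * zp0;
         zm1 = eix (mum * \<tau>) * zm0;
         dzp1 = \<i> * complex_of_real mup * zp1;
         dzm1 = \<i> * complex_of_real mum * zm1;
         ddzp1 = - complex_of_real (mup\<^sup>2) * zp1;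
         ddzm1 = - complex_of_real (mum\<^sup>2) * zm1;
         w = dr0 - complex_of_real (\<tau> / 2) * u0;
         r1 = complex_of_real (sin (\<omega> * \<tau>) / \<omega>) * w
              - (\<Sum>k=1..p. Pk eps \<alpha> \<tau> k * gp k + Qk eps \<alpha> \<tau> k * dgp k
                            + cnj (Pk eps \<alpha> \<tau> k * gm k) + cnj (Qk eps \<alpha> \<tau> k * dgm k));
         y1 = eix (\<tau> / eps\<^sup>2) * zp1 + eix (- \<tau> / eps\<^sup>2) * cnj zm1 + r1;
         u1 = eix (\<tau> / eps\<^sup>2) * ddzp1 + eix (- \<tau> / eps\<^sup>2) * cnj ddzm1;
         h1 = fnl lam p y1 - fnl lam p (y1 - r1);
         dr1 = - (\<Sum>k=1..p. dPk eps \<alpha> \<tau> k * gp k + dQk eps \<alpha> \<tau> k * dgp k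
                            + cnj (dPk eps \<alpha> \<tau> k * gm k) + cnj (dQk eps \<alpha> \<tau> k * dgm k))
               + complex_of_real (cos (\<omega> * \<tau>)) * w
               - complex_of_real (\<tau> / 2) * (h1 / e2 + u1);
         dy1 = eix (\<tau> / eps\<^sup>2) * (dzp1 + \<i> / e2 * zp1)
               + eix (- \<tau> / eps\<^sup>2) * (cnj dzm1 - \<i> / e2 * cnj zm1) + dr1
     in (y1, dy1))"

definition mti :: "real \<Rightarrow> real \<Rightarrow> real \<Rightarrow> nat \<Rightarrow> real \<Rightarrow> complex \<Rightarrow> complex \<Rightarrow> nat \<Rightarrow> complex \<times> complex" where
  "mti eps \<alpha> lam p \<tau> \<phi>1 \<phi>2 n = (mti_step eps \<alpha> lam p \<tau> ^^ n) (\<phi>1, \<phi>2 / complex_of_real (eps\<^sup>2))"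

definition energy :: "real \<Rightarrow> real \<Rightarrow> complex \<Rightarrow> complex \<Rightarrow> real" where
  "energy eps \<alpha> e de = eps\<^sup>2 * (cmod de)\<^sup>2 + (\<alpha> + 1 / eps\<^sup>2) * (cmod e)\<^sup>2"

definition solves_on :: "real \<Rightarrow> real \<Rightarrow> real \<Rightarrow> nat \<Rightarrow> real \<Rightarrow>
    (real \<Rightarrow> complex) \<Rightarrow> (real \<Rightarrow> complex) \<Rightarrow> (real \<Rightarrow> complex) \<Rightarrow> bool" where
  "solves_on eps \<alpha> lam p S z dz ddz \<longleftrightarrow>
     (\<forall>t\<in>{0..S}. (z has_vector_derivative dz t) (at t within {0..S})
              \<and> (dz has_vector_derivative ddz t) (at t within {0..S})
              \<and> complex_of_real (eps\<^sup>2) * ddz t + complex_of_real (\<alpha> + 1 / eps\<^sup>2) * z t + fnl lam p (z t) = 0)"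

end

theory Submission
  imports Defs
begin


lemma normsq_deriv:
  fixes w :: "real \<Rightarrow> complex"
  assumes "(w has_vector_derivative w') (at x within S)"
  shows "((\<lambda>s. (cmod (w s))\<^sup>2) has_real_derivative (2 * inner (w x) w')) (at x within S)"
proof -
  have "((\<lambda>s. inner (w s) (w s)) has_derivative (\<lambda>h. inner (w x) (h *\<^sub>R w') + inner (h *\<^sub>R w') (w x))) (at x within S)"
    using has_derivative_inner[OF assms[unfolded has_vector_derivative_def] assms[unfolded has_vector_derivative_def]] .
  then have "((\<lambda>s. inner (w s) (w s)) has_derivative (\<lambda>h. (2 * inner (w x) w') * h)) (at x within S)"
    by (rule has_derivative_eq_rhs) (auto simp: inner_commute algebra_simps)
  then show ?thesis
    by (simp add: has_field_derivative_def power2_norm_eq_inner)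
qed

lemma gronwall2:
  fixes \<phi> \<phi>' :: "real \<Rightarrow> real"
  assumes S: "0 \<le> S" and L: "0 \<le> L"
    and d: "\<And>s. s \<in> {0..S} \<Longrightarrow> (\<phi> has_real_derivative \<phi>' s) (at s within {0..S})"
    and b: "\<And>s. s \<in> {0..S} \<Longrightarrow> \<bar>\<phi>' s\<bar> \<le> L * \<phi> s"
  shows "\<phi> S \<le> exp (L * S) * \<phi> 0 \<and> exp (- (L * S)) * \<phi> 0 \<le> \<phi> S"
proof -
  have dd: "((\<lambda>s. exp (c * s) * \<phi> s) has_real_derivative (c * exp (c * s) * \<phi> s + exp (c * s) * \<phi>' s)) (at s within {0..S})"
    if "s \<in> {0..S}" for s c
    by (auto intro!: derivative_eq_intros d that)
  have cont: "continuous_on {0..S} (\<lambda>s. exp (c * s) * \<phi> s)" for c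
    by (rule DERIV_continuous_on[OF dd])
  have at: "at s within {0..S} = at s" if "0 < s" "s < S" for s
    using that by (simp add: at_within_Icc_at)
  have A: "(\<lambda>s. exp (- L * s) * \<phi> s) 0 \<ge> (\<lambda>s. exp (- L * s) * \<phi> s) S"
  proof (rule DERIV_nonpos_imp_decreasing_open[OF S _ cont])
    fix s assume s: "0 < s" "s < S"
    have "- L * exp (- L * s) * \<phi> s + exp (- L * s) * \<phi>' s = exp (- L * s) * (\<phi>' s - L * \<phi> s)"
      by (simp add: algebra_simps)
    also have "\<dots> \<le> 0" using b[of s] s by (intro mult_nonneg_nonpos) auto
    finally show "\<exists>y. ((\<lambda>s. exp (- L * s) * \<phi> s) has_real_derivative y) (at s) \<and> y \<le> 0"
      using dd[of s "-L"] s at[OF s] by auto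
  qed
  have B: "(\<lambda>s. exp (L * s) * \<phi> s) 0 \<le> (\<lambda>s. exp (L * s) * \<phi> s) S"
  proof (rule DERIV_nonneg_imp_increasing_open[OF S _ cont])
    fix s assume s: "0 < s" "s < S"
    have "0 \<le> exp (L * s) * (\<phi>' s + L * \<phi> s)" using b[of s] s by (intro mult_nonneg_nonneg) auto
    also have "\<dots> = L * exp (L * s) * \<phi> s + exp (L * s) * \<phi>' s"
      by (simp add: algebra_simps)
    finally show "\<exists>y. ((\<lambda>s. exp (L * s) * \<phi> s) has_real_derivative y) (at s) \<and> 0 \<le> y"
      using dd[of s "L"] s at[OF s] by auto
  qed
  have "\<phi> S = exp (L * S) * (exp (- L * S) * \<phi> S)" by (simp add: exp_minus field_simps)
  also have "\<dots> \<le> exp (L * S) * \<phi> 0" using A by simp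
  finally have 1: "\<phi> S \<le> exp (L * S) * \<phi> 0" .
  have "exp (- (L * S)) * \<phi> 0 \<le> exp (- (L * S)) * (exp (L * S) * \<phi> S)"
    using B by simp
  also have "\<dots> = \<phi> S" by (simp add: exp_minus field_simps)
  finally show ?thesis using 1 by simp
qed



lemma two_ab_le:
  fixes a b e :: real assumes "e > 0"
  shows "2 * a * b \<le> e\<^sup>2 * a\<^sup>2 + b\<^sup>2 / e\<^sup>2"
proof -
  have "0 \<le> (e * a - b / e)\<^sup>2" by simp
  also have "\<dots> = e\<^sup>2 * a\<^sup>2 + b\<^sup>2 / e\<^sup>2 - 2 * a * b"
    using assms by (simp add: power2_eq_square field_simps)
  finally show ?thesis by simp
qed

lemma energy_gronwall:
  fixes u du ddu v dv ddv :: "real \<Rightarrow> complex"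
  assumes eps: "eps > 0" and al: "\<alpha> \<ge> 0" and S: "S \<ge> 0" and L: "L \<ge> 0"
    and su: "solves_on eps \<alpha> lam p S u du ddu"
    and sv: "solves_on eps \<alpha> lam p S v dv ddv"
    and lip: "\<And>s. s \<in> {0..S} \<Longrightarrow> cmod (fnl lam p (u s) - fnl lam p (v s)) \<le> L * cmod (u s - v s)"
  shows "energy eps \<alpha> (u S - v S) (du S - dv S) \<le> exp (L * S) * energy eps \<alpha> (u 0 - v 0) (du 0 - dv 0)
       \<and> exp (- (L * S)) * energy eps \<alpha> (u 0 - v 0) (du 0 - dv 0) \<le> energy eps \<alpha> (u S - v S) (du S - dv S)"
proof -
  define c where "c = \<alpha> + 1 / eps\<^sup>2"
  define \<phi> where "\<phi> s = energy eps \<alpha> (u s - v s) (du s - dv s)" for s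
  define \<phi>' where "\<phi>' s = eps\<^sup>2 * (2 * inner (du s - dv s) (ddu s - ddv s)) + c * (2 * inner (u s - v s) (du s - dv s))" for s
  have c0: "c \<ge> 1 / eps\<^sup>2" using al by (simp add: c_def)
  have d: "(\<phi> has_real_derivative \<phi>' s) (at s within {0..S})" if s: "s \<in> {0..S}" for s
  proof -
    have u1: "(u has_vector_derivative du s) (at s within {0..S})"
      and u2: "(du has_vector_derivative ddu s) (at s within {0..S})"
      and v1: "(v has_vector_derivative dv s) (at s within {0..S})"
      and v2: "(dv has_vector_derivative ddv s) (at s within {0..S})"
      using su sv s unfolding solves_on_def by auto
    have w1: "((\<lambda>s. u s - v s) has_vector_derivative (du s - dv s)) (at s within {0..S})"
      by (rule has_vector_derivative_diff[OF u1 v1])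
    have w2: "((\<lambda>s. du s - dv s) has_vector_derivative (ddu s - ddv s)) (at s within {0..S})"
      by (rule has_vector_derivative_diff[OF u2 v2])
    show ?thesis
      unfolding \<phi>_def \<phi>'_def energy_def c_def[symmetric]
      by (intro DERIV_add DERIV_cmult normsq_deriv[OF w1] normsq_deriv[OF w2])
  qed
  have b: "\<bar>\<phi>' s\<bar> \<le> L * \<phi> s" if s: "s \<in> {0..S}" for s
  proof -
    define w where "w = u s - v s"
    define dw where "dw = du s - dv s"
    define D where "D = fnl lam p (u s) - fnl lam p (v s)"
    have eu: "complex_of_real (eps\<^sup>2) * ddu s + complex_of_real c * u s + fnl lam p (u s) = 0"
      and ev: "complex_of_real (eps\<^sup>2) * ddv s + complex_of_real c * v s + fnl lam p (v s) = 0"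
      using su sv s unfolding solves_on_def c_def by auto
    have "complex_of_real (eps\<^sup>2) * (ddu s - ddv s) = - (complex_of_real c * w) - D"
      using eu ev unfolding w_def D_def by (simp add: algebra_simps) (metis add.commute add_diff_cancel_right' diff_diff_add eq_neg_iff_add_eq_0 minus_diff_eq)
    then have "eps\<^sup>2 *\<^sub>R (ddu s - ddv s) = - (c *\<^sub>R w) - D"
      by (simp add: scaleR_conv_of_real)
    then have "inner dw (eps\<^sup>2 *\<^sub>R (ddu s - ddv s)) = inner dw (- (c *\<^sub>R w) - D)" by simp
    then have "eps\<^sup>2 * inner dw (ddu s - ddv s) = - c * inner dw w - inner dw D"
      by (simp add: inner_diff_right)
    then have ph: "\<phi>' s = - 2 * inner dw D"
      unfolding \<phi>'_def w_def[symmetric] dw_def[symmetric] by (simp add: inner_commute algebra_simps)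
    have "\<bar>\<phi>' s\<bar> \<le> 2 * (norm dw * norm D)"
      unfolding ph using Cauchy_Schwarz_ineq2[of dw D] by simp
    also have "\<dots> \<le> 2 * (norm dw * (L * norm w))"
      using lip[OF s] unfolding D_def w_def by (intro mult_left_mono) auto
    also have "\<dots> = L * (2 * norm dw * norm w)" by simp
    also have "\<dots> \<le> L * (eps\<^sup>2 * (norm dw)\<^sup>2 + (norm w)\<^sup>2 / eps\<^sup>2)"
      using two_ab_le[OF eps] L by (intro mult_left_mono) auto
    also have "\<dots> \<le> L * \<phi> s"
    proof -
      have "(norm w)\<^sup>2 / eps\<^sup>2 = (1/eps\<^sup>2) * (norm w)\<^sup>2" by simp
      also have "\<dots> \<le> c * (norm w)\<^sup>2" using c0 by (intro mult_right_mono) auto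
      finally show ?thesis using L
        unfolding \<phi>_def energy_def c_def[symmetric] w_def[symmetric] dw_def[symmetric]
        by (intro mult_left_mono) auto
    qed
    finally show ?thesis .
  qed
  show ?thesis using gronwall2[OF S L d b] unfolding \<phi>_def by simp
qed



lemma pow_diff_le:
  fixes x y R :: real
  assumes "0 \<le> x" "x \<le> R" "0 \<le> y" "y \<le> R" "1 \<le> R"
  shows "\<bar>x ^ n - y ^ n\<bar> \<le> real n * R ^ n * \<bar>x - y\<bar>"
proof (induction n)
  case 0 then show ?case by simp
next
  case (Suc n)
  have eq: "x ^ Suc n - y ^ Suc n = x ^ n * (x - y) + y * (x ^ n - y ^ n)"
    by (simp add: algebra_simps)
  have xn: "x ^ n \<le> R ^ n" using assms by (intro power_mono) auto
  have R1: "R ^ n \<le> R ^ Suc n" using assms by simp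
  have "\<bar>x ^ Suc n - y ^ Suc n\<bar> \<le> x ^ n * \<bar>x - y\<bar> + y * \<bar>x ^ n - y ^ n\<bar>"
    unfolding eq using assms abs_triangle_ineq[of "x ^ n * (x - y)" "y * (x ^ n - y ^ n)"]
    by (simp add: abs_mult)
  also have "\<dots> \<le> R ^ n * \<bar>x - y\<bar> + R * (real n * R ^ n * \<bar>x - y\<bar>)"
    using Suc xn assms by (intro add_mono mult_mono) auto
  also have "\<dots> \<le> R ^ Suc n * \<bar>x - y\<bar> + real n * R ^ Suc n * \<bar>x - y\<bar>"
    using R1 by (intro add_mono mult_right_mono) (auto simp: algebra_simps)
  also have "\<dots> = real (Suc n) * R ^ Suc n * \<bar>x - y\<bar>" by (simp add: algebra_simps)
  finally show ?case .
qed

lemma fnl_eq: "fnl lam p z = complex_of_real (lam * cmod z ^ (2 * p)) * z"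
  unfolding fnl_def gnl_def by (simp add: power_mult)

lemma fnl_lip:
  assumes "cmod a \<le> R" "cmod b \<le> R" "1 \<le> R"
  shows "cmod (fnl lam p a - fnl lam p b) \<le> \<bar>lam\<bar> * (1 + 2 * real p) * R ^ (2 * p + 1) * cmod (a - b)"
proof -
  have eq: "fnl lam p a - fnl lam p b = complex_of_real lam * (complex_of_real (cmod a ^ (2*p)) * (a - b)
       + complex_of_real (cmod a ^ (2*p) - cmod b ^ (2*p)) * b)"
    unfolding fnl_eq by (simp add: algebra_simps)
  have ap: "cmod a ^ (2*p) \<le> R ^ (2*p)" using assms by (intro power_mono) auto
  have RR: "R ^ (2*p) \<le> R ^ (2*p+1)" using assms by simp
  have d: "\<bar>cmod a ^ (2*p) - cmod b ^ (2*p)\<bar> \<le> real (2*p) * R ^ (2*p) * cmod (a - b)"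
  proof -
    have "\<bar>cmod a ^ (2*p) - cmod b ^ (2*p)\<bar> \<le> real (2*p) * R ^ (2*p) * \<bar>cmod a - cmod b\<bar>"
      using assms by (intro pow_diff_le) auto
    also have "\<dots> \<le> real (2*p) * R ^ (2*p) * cmod (a - b)"
      using assms by (intro mult_left_mono norm_triangle_ineq3) auto
    finally show ?thesis .
  qed
  have "cmod (fnl lam p a - fnl lam p b) \<le> \<bar>lam\<bar> * (cmod a ^ (2*p) * cmod (a - b)
       + \<bar>cmod a ^ (2*p) - cmod b ^ (2*p)\<bar> * cmod b)"
    unfolding eq norm_mult
    using norm_triangle_ineq[of "complex_of_real (cmod a ^ (2 * p)) * (a - b)" "complex_of_real (cmod a ^ (2 * p) - cmod b ^ (2 * p)) * b"]
    by (simp only: norm_of_real norm_mult) (intro mult_left_mono; simp add: norm_mult)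
  also have "\<dots> \<le> \<bar>lam\<bar> * (R ^ (2*p+1) * cmod (a - b) + (real (2*p) * R ^ (2*p) * cmod (a - b)) * R)"
    using order.trans[OF ap RR] d assms by (intro mult_left_mono add_mono mult_mono) auto
  also have "\<dots> = \<bar>lam\<bar> * (1 + 2 * real p) * R ^ (2 * p + 1) * cmod (a - b)"
    by (simp add: algebra_simps)
  finally show ?thesis .
qed

lemma solves_zero: "solves_on eps \<alpha> lam p S (\<lambda>_. 0) (\<lambda>_. 0) (\<lambda>_. 0)"
  unfolding solves_on_def fnl_def by auto

lemma solves_sub:
  assumes "solves_on eps \<alpha> lam p S z dz ddz" "S' \<le> S"
  shows "solves_on eps \<alpha> lam p S' z dz ddz"
  using assms unfolding solves_on_def
  by (meson atLeastAtMost_iff atLeastatMost_subset_iff has_vector_derivative_within_subset order.refl order_trans)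

lemma solves_shift:
  assumes "solves_on eps \<alpha> lam p T z dz ddz" "0 \<le> a" "a + S \<le> T"
  shows "solves_on eps \<alpha> lam p S (\<lambda>s. z (a + s)) (\<lambda>s. dz (a + s)) (\<lambda>s. ddz (a + s))"
  unfolding solves_on_def
proof
  fix s assume s: "s \<in> {0..S}"
  have sub: "(\<lambda>s. a + s) ` {0..S} \<subseteq> {0..T}" using assms by auto
  have sh: "((\<lambda>s. a + s) has_vector_derivative 1) (at s within {0..S})"
    by (auto intro!: derivative_eq_intros)
  have in': "a + s \<in> {0..T}" using s assms by auto
  have chain: "(g \<circ> (\<lambda>s. a + s) has_vector_derivative g') (at s within {0..S})"
    if "(g has_vector_derivative g') (at (a + s) within {0..T})" for g :: "real \<Rightarrow> complex" and g'
    using vector_diff_chain_within[OF sh has_vector_derivative_within_subset[OF that sub]] by simp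
  show "((\<lambda>s. z (a + s)) has_vector_derivative dz (a + s)) (at s within {0..S}) \<and>
         ((\<lambda>s. dz (a + s)) has_vector_derivative ddz (a + s)) (at s within {0..S}) \<and>
         complex_of_real (eps\<^sup>2) * ddz (a + s) + complex_of_real (\<alpha> + 1 / eps\<^sup>2) * z (a + s) + fnl lam p (z (a + s)) = 0"
    using chain[of z "dz (a+s)"] chain[of dz "ddz (a+s)"] assms(1) in' unfolding solves_on_def o_def by auto
qed



lemma bootstrap:
  fixes yt ydt yddt :: "real \<Rightarrow> complex"
  assumes eps: "0 < eps" and al: "\<alpha> \<ge> 0" and tau: "0 < \<tau>" and B: "0 \<le> B" and K: "0 \<le> K"
    and sol: "solves_on eps \<alpha> lam p \<tau> yt ydt yddt"
    and y0: "cmod (yt 0) \<le> B + 1" and dy0: "cmod (ydt 0) \<le> (B + 1) / eps\<^sup>2"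
    and gK: "\<And>\<rho>. \<rho> \<in> {0..(2*B+4)\<^sup>2} \<Longrightarrow> \<bar>gnl lam p \<rho>\<bar> \<le> K"
    and small: "\<tau> * (2 * B + 4) * K \<le> 1"
  shows "\<forall>s\<in>{0..\<tau>}. cmod (yt s) \<le> 2 * B + 4"
proof (rule ccontr)
  assume "\<not> ?thesis"
  then obtain s0 where s0: "s0 \<in> {0..\<tau>}" "cmod (yt s0) > 2 * B + 4" by auto
  define R1 where "R1 = 2 * B + 3"
  define A where "A = {0..\<tau>} \<inter> (\<lambda>s. cmod (yt s)) -` {R1..}"
  have contyt: "continuous_on {0..\<tau>} yt"
    using sol unfolding solves_on_def by (intro continuous_on_vector_derivative) auto
  have cA: "closed A" unfolding A_def
    by (intro continuous_closed_preimage continuous_on_norm contyt) auto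
  have neA: "A \<noteq> {}" using s0 by (auto simp: A_def R1_def)
  have bA: "bdd_below A" unfolding A_def by (rule bdd_belowI[of _ 0]) auto
  define s1 where "s1 = Inf A"
  have s1A: "s1 \<in> A" unfolding s1_def by (rule closed_contains_Inf[OF neA bA cA])
  then have s1: "0 \<le> s1" "s1 \<le> \<tau>" "R1 \<le> cmod (yt s1)" by (auto simp: A_def)
  have lt: "cmod (yt r) < R1" if "0 \<le> r" "r < s1" for r
  proof (rule ccontr)
    assume "\<not> ?thesis"
    then have "r \<in> A" using that s1 by (auto simp: A_def)
    then have "s1 \<le> r" unfolding s1_def by (rule cInf_lower[OF _ bA])
    then show False using that by simp
  qed
  have s1pos: "0 < s1"
  proof (rule ccontr)
    assume "\<not> 0 < s1" then have "s1 = 0" using s1 by simp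
    then show False using s1 y0 B by (simp add: R1_def)
  qed
  have le: "\<forall>r\<in>{0..s1}. cmod (yt r) \<le> R1"
  proof -
    define Bs where "Bs = {0..s1} \<inter> (\<lambda>s. cmod (yt s)) -` {..R1}"
    have "closed Bs" unfolding Bs_def
      by (intro continuous_closed_preimage continuous_on_norm continuous_on_subset[OF contyt]) (use s1 in auto)
    moreover have "{0..<s1} \<subseteq> Bs" using lt by (auto simp: Bs_def less_imp_le)
    ultimately have "closure {0..<s1} \<subseteq> Bs" by (rule closure_minimal[rotated])
    then have "{0..s1} \<subseteq> Bs" using s1pos by simp
    then show ?thesis by (auto simp: Bs_def)
  qed
  have sol1: "solves_on eps \<alpha> lam p s1 yt ydt yddt" by (rule solves_sub[OF sol s1(2)])
  have lip: "cmod (fnl lam p (yt s) - fnl lam p 0) \<le> K * cmod (yt s - 0)" if "s \<in> {0..s1}" for s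
  proof -
    have "(cmod (yt s))\<^sup>2 \<le> (2*B+4)\<^sup>2"
      using le that B by (intro power_mono) (force simp: R1_def)+
    then have "\<bar>gnl lam p ((cmod (yt s))\<^sup>2)\<bar> \<le> K" by (intro gK) auto
    then show ?thesis unfolding fnl_def by (simp add: norm_mult mult_right_mono fnl_def)
  qed
  have G: "energy eps \<alpha> (yt s1 - 0) (ydt s1 - 0) \<le> exp (K * s1) * energy eps \<alpha> (yt 0 - 0) (ydt 0 - 0)"
    using energy_gronwall[OF eps al s1(1) K sol1 solves_zero lip] by simp
  define c where "c = \<alpha> + 1 / eps\<^sup>2"
  have c0: "c \<ge> 1 / eps\<^sup>2" using al by (simp add: c_def)
  have cpos: "c > 0" using eps al by (simp add: c_def add_nonneg_pos)
  have "K * s1 \<le> K * \<tau>" using K s1 by (intro mult_left_mono) auto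
  also have "\<dots> \<le> 1 / 4"
  proof -
    have "K * \<tau> * 4 \<le> K * \<tau> * (2 * B + 4)" using K tau B by (intro mult_left_mono) auto
    also have "\<dots> \<le> 1" using small by (simp add: algebra_simps)
    finally show ?thesis by simp
  qed
  finally have Ks: "K * s1 \<le> 1/4" .
  have "exp (K * s1) \<le> 1 + 2 * (K * s1)"
    using exp_bound_lemma[of "K * s1"] Ks K s1 by simp
  also have "\<dots> \<le> 3/2" using Ks by simp
  finally have ex: "exp (K * s1) \<le> 3/2" .
  have E0: "energy eps \<alpha> (yt 0) (ydt 0) \<le> 2 * c * (B + 1)\<^sup>2"
  proof -
    have "eps\<^sup>2 * (cmod (ydt 0))\<^sup>2 \<le> eps\<^sup>2 * ((B + 1) / eps\<^sup>2)\<^sup>2"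
      using dy0 by (intro mult_left_mono power_mono) auto
    also have "\<dots> = (1 / eps\<^sup>2) * (B + 1)\<^sup>2" using eps by (simp add: power2_eq_square field_simps)
    also have "\<dots> \<le> c * (B + 1)\<^sup>2" using c0 by (intro mult_right_mono) auto
    finally have 1: "eps\<^sup>2 * (cmod (ydt 0))\<^sup>2 \<le> c * (B + 1)\<^sup>2" .
    have 2: "c * (cmod (yt 0))\<^sup>2 \<le> c * (B + 1)\<^sup>2"
      using y0 cpos by (intro mult_left_mono power_mono) auto
    show ?thesis using 1 2 unfolding energy_def c_def[symmetric] by simp
  qed
  have "c * (cmod (yt s1))\<^sup>2 \<le> energy eps \<alpha> (yt s1) (ydt s1)"
    unfolding energy_def c_def[symmetric] by simp
  also have "\<dots> \<le> exp (K * s1) * energy eps \<alpha> (yt 0) (ydt 0)" using G by simp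
  also have "\<dots> \<le> 3/2 * (2 * c * (B + 1)\<^sup>2)"
    using ex E0 cpos unfolding energy_def c_def[symmetric] by (intro mult_mono) auto
  finally have "c * (cmod (yt s1))\<^sup>2 \<le> c * (3 * (B + 1)\<^sup>2)" by simp
  then have "(cmod (yt s1))\<^sup>2 \<le> 3 * (B + 1)\<^sup>2" using cpos by simp
  moreover have "R1\<^sup>2 \<le> (cmod (yt s1))\<^sup>2" using s1 B by (intro power_mono) (auto simp: R1_def)
  ultimately have "R1\<^sup>2 \<le> 3 * (B + 1)\<^sup>2" by simp
  then show False using B by (simp add: R1_def power2_eq_square algebra_simps) (smt (verit) mult_nonneg_nonneg)
qed



lemma final_arith:
  fixes E0 E1 L Lm \<tau> T :: real
  assumes "0 \<le> E0" "0 \<le> L" "0 \<le> \<tau>" "L \<le> Lm" "\<tau> \<le> T"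
    and up: "E1 \<le> exp (L * \<tau>) * E0" and lo: "exp (- (L * \<tau>)) * E0 \<le> E1"
  shows "\<bar>E1 - E0\<bar> \<le> (Lm * exp (Lm * T) + 1) * \<tau> * E0"
proof -
  define x where "x = L * \<tau>"
  have x0: "0 \<le> x" using assms by (simp add: x_def)
  have a: "exp x - 1 \<le> x * exp x"
  proof -
    have "1 - x \<le> exp (- x)" using exp_ge_add_one_self[of "-x"] by simp
    then have "(1 - x) * exp x \<le> exp (-x) * exp x" by (intro mult_right_mono) auto
    then show ?thesis by (simp add: exp_minus algebra_simps)
  qed
  have b: "1 - exp (- x) \<le> x" using exp_ge_add_one_self[of "-x"] by simp
  have "x * exp x \<le> (Lm * exp (Lm * T)) * \<tau>"
  proof -
    have "x \<le> Lm * \<tau>" unfolding x_def using assms by (intro mult_right_mono) auto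
    moreover have "exp x \<le> exp (Lm * T)" unfolding x_def using assms
      by (simp add: mult_mono)
    ultimately have "x * exp x \<le> Lm * \<tau> * exp (Lm * T)" using x0 by (intro mult_mono) auto
    then show ?thesis by (simp add: algebra_simps)
  qed
  then have c: "x * exp x \<le> (Lm * exp (Lm * T) + 1) * \<tau>" using assms by (simp add: algebra_simps)
  have "E1 - E0 \<le> (exp x - 1) * E0" using up by (simp add: x_def algebra_simps)
  also have "\<dots> \<le> (x * exp x) * E0" using a assms by (intro mult_right_mono) auto
  finally have 1: "E1 - E0 \<le> (x * exp x) * E0" .
  have "E0 - E1 \<le> (1 - exp (-x)) * E0" using lo by (simp add: x_def algebra_simps)
  also have "\<dots> \<le> (x * exp x) * E0" using b x0 assms
    by (intro mult_right_mono) (auto intro: order.trans[of _ x] simp: mult_le_cancel_left1)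
  finally have 2: "E0 - E1 \<le> (x * exp x) * E0" .
  have "\<bar>E1 - E0\<bar> \<le> (x * exp x) * E0" using 1 2 by linarith
  also have "\<dots> \<le> (Lm * exp (Lm * T) + 1) * \<tau> * E0" using c assms by (intro mult_right_mono) auto
  finally show ?thesis .
qed



theorem lemmaB3:
  fixes \<alpha> lam T M :: real and p :: nat and \<phi>1 \<phi>2 :: complex
    and y yd ydd :: "real \<Rightarrow> real \<Rightarrow> complex"
  assumes alpha_nonneg: "\<alpha> \<ge> 0"
    and T_pos: "T > 0"
    and sol: "\<And>eps. 0 < eps \<Longrightarrow> eps \<le> 1 \<Longrightarrow>
                solves_on eps \<alpha> lam p T (y eps) (yd eps) (ydd eps)
                \<and> continuous_on {0..T} (ydd eps)
                \<and> y eps 0 = \<phi>1 \<and> yd eps 0 = \<phi>2 / complex_of_real (eps\<^sup>2)"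
    and bnd: "\<And>eps t. 0 < eps \<Longrightarrow> eps \<le> 1 \<Longrightarrow> t \<in> {0..T} \<Longrightarrow>
                cmod (y eps t) \<le> M \<and> cmod (yd eps t) \<le> M / eps\<^sup>2 \<and> cmod (ydd eps t) \<le> M / eps ^ 4"
  shows "\<exists>C>0. \<forall>eps \<tau> (n::nat) yt ydt yddt.
     let C0 = max (SUP t\<in>{0..T}. cmod (y eps t))
                  (max (eps\<^sup>2 * (SUP t\<in>{0..T}. cmod (yd eps t))) (eps ^ 4 * (SUP t\<in>{0..T}. cmod (ydd eps t))));
         K1 = (SUP \<rho>\<in>{0..(2 * C0 + 4)\<^sup>2}. \<bar>gnl lam p \<rho>\<bar>);
         yn = fst (mti eps \<alpha> lam p \<tau> \<phi>1 \<phi>2 n);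
         ydn = snd (mti eps \<alpha> lam p \<tau> \<phi>1 \<phi>2 n);
         tn = real n * \<tau>;
         en = y eps tn - yn;
         den = yd eps tn - ydn;
         eta = y eps (tn + \<tau>) - yt \<tau>;
         deta = yd eps (tn + \<tau>) - ydt \<tau>
     in (0 < eps \<and> eps \<le> 1 \<and> 0 < \<tau> \<and> \<tau> * (2 * C0 + 4) * K1 \<le> 1
         \<and> real n \<le> T / \<tau> - 1
         \<and> cmod yn \<le> C0 + 1 \<and> cmod ydn \<le> (C0 + 1) / eps\<^sup>2
         \<and> solves_on eps \<alpha> lam p \<tau> yt ydt yddt \<and> yt 0 = yn \<and> ydt 0 = ydn
         \<longrightarrow> \<bar>energy eps \<alpha> eta deta - energy eps \<alpha> en den\<bar> \<le> C * \<tau> * energy eps \<alpha> en den)"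
proof -
  have M0: "0 \<le> M" using bnd[of 1 0] T_pos by (auto intro: order.trans[OF norm_ge_zero])
  define Lm where "Lm = \<bar>lam\<bar> * (1 + 2 * real p) * (2 * M + 4) ^ (2 * p + 1)"
  have Lm0: "0 \<le> Lm" using M0 by (simp add: Lm_def)
  define C where "C = Lm * exp (Lm * T) + 1"
  have C0: "C > 0" using Lm0 by (simp add: C_def add_nonneg_pos)
  show ?thesis
  proof (rule exI[of _ C], intro conjI C0 allI)
    fix eps \<tau> yt ydt yddt and n :: nat
    show "let C0 = max (SUP t\<in>{0..T}. cmod (y eps t))
                  (max (eps\<^sup>2 * (SUP t\<in>{0..T}. cmod (yd eps t))) (eps ^ 4 * (SUP t\<in>{0..T}. cmod (ydd eps t))));
         K1 = (SUP \<rho>\<in>{0..(2 * C0 + 4)\<^sup>2}. \<bar>gnl lam p \<rho>\<bar>);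
         yn = fst (mti eps \<alpha> lam p \<tau> \<phi>1 \<phi>2 n);
         ydn = snd (mti eps \<alpha> lam p \<tau> \<phi>1 \<phi>2 n);
         tn = real n * \<tau>;
         en = y eps tn - yn;
         den = yd eps tn - ydn;
         eta = y eps (tn + \<tau>) - yt \<tau>;
         deta = yd eps (tn + \<tau>) - ydt \<tau>
     in (0 < eps \<and> eps \<le> 1 \<and> 0 < \<tau> \<and> \<tau> * (2 * C0 + 4) * K1 \<le> 1
         \<and> real n \<le> T / \<tau> - 1
         \<and> cmod yn \<le> C0 + 1 \<and> cmod ydn \<le> (C0 + 1) / eps\<^sup>2
         \<and> solves_on eps \<alpha> lam p \<tau> yt ydt yddt \<and> yt 0 = yn \<and> ydt 0 = ydn
         \<longrightarrow> \<bar>energy eps \<alpha> eta deta - energy eps \<alpha> en den\<bar> \<le> C * \<tau> * energy eps \<alpha> en den)"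
      unfolding Let_def
    proof (intro impI, elim conjE)
      define S1 where "S1 = (SUP t\<in>{0..T}. cmod (y eps t))"
      define S2 where "S2 = (SUP t\<in>{0..T}. cmod (yd eps t))"
      define S3 where "S3 = (SUP t\<in>{0..T}. cmod (ydd eps t))"
      define B where "B = max S1 (max (eps\<^sup>2 * S2) (eps ^ 4 * S3))"
      define R where "R = 2 * B + 4"
      define K1 where "K1 = (SUP \<rho>\<in>{0..R\<^sup>2}. \<bar>gnl lam p \<rho>\<bar>)"
      define yn where "yn = fst (mti eps \<alpha> lam p \<tau> \<phi>1 \<phi>2 n)"
      define ydn where "ydn = snd (mti eps \<alpha> lam p \<tau> \<phi>1 \<phi>2 n)"
      define tn where "tn = real n * \<tau>"
      assume eps: "0 < eps" "eps \<le> 1" and tau: "0 < \<tau>"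
        and small0: "\<tau> * (2 * max S1 (max (eps\<^sup>2 * S2) (eps ^ 4 * S3)) + 4) *
            (SUP \<rho>\<in>{0..(2 * max S1 (max (eps\<^sup>2 * S2) (eps ^ 4 * S3)) + 4)\<^sup>2}. \<bar>gnl lam p \<rho>\<bar>) \<le> 1"
        and nT: "real n \<le> T / \<tau> - 1"
        and yn0: "cmod yn \<le> max S1 (max (eps\<^sup>2 * S2) (eps ^ 4 * S3)) + 1"
        and ydn0: "cmod ydn \<le> (max S1 (max (eps\<^sup>2 * S2) (eps ^ 4 * S3)) + 1) / eps\<^sup>2"
        and solt: "solves_on eps \<alpha> lam p \<tau> yt ydt yddt" and yt0: "yt 0 = yn" and ydt0: "ydt 0 = ydn"
      have B_def': "max S1 (max (eps\<^sup>2 * S2) (eps ^ 4 * S3)) = B" by (simp add: B_def)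
      have small: "\<tau> * (2 * B + 4) * K1 \<le> 1" using small0 unfolding B_def' K1_def R_def .
      have yn1: "cmod (yt 0) \<le> B + 1" using yn0 yt0 B_def' by simp
      have ydn1: "cmod (ydt 0) \<le> (B + 1) / eps\<^sup>2" using ydn0 ydt0 B_def' by simp
      have ne: "{0..T} \<noteq> {}" using T_pos by simp
      have b1: "\<And>t. t \<in> {0..T} \<Longrightarrow> cmod (y eps t) \<le> M"
        and b2: "\<And>t. t \<in> {0..T} \<Longrightarrow> cmod (yd eps t) \<le> M / eps\<^sup>2"
        and b3: "\<And>t. t \<in> {0..T} \<Longrightarrow> cmod (ydd eps t) \<le> M / eps ^ 4"
        using bnd[OF eps] by auto
      have bd1: "bdd_above ((\<lambda>t. cmod (y eps t)) ` {0..T})" using b1 by (intro bdd_aboveI2) auto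
      have S1le: "S1 \<le> M" unfolding S1_def using b1 ne by (intro cSUP_least) auto
      have S2le: "S2 \<le> M / eps\<^sup>2" unfolding S2_def using b2 ne by (intro cSUP_least) auto
      have S3le: "S3 \<le> M / eps ^ 4" unfolding S3_def using b3 ne by (intro cSUP_least) auto
      have S1ge: "cmod (y eps t) \<le> S1" if "t \<in> {0..T}" for t
        unfolding S1_def using bd1 that by (intro cSUP_upper) auto
      have "eps\<^sup>2 * S2 \<le> eps\<^sup>2 * (M / eps\<^sup>2)" using S2le by (intro mult_left_mono) auto
      also have "\<dots> = M" using eps by simp
      finally have S2M: "eps\<^sup>2 * S2 \<le> M" .
      have "eps ^ 4 * S3 \<le> eps ^ 4 * (M / eps ^ 4)" using S3le by (intro mult_left_mono) auto
      also have "\<dots> = M" using eps by simp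
      finally have S3M: "eps ^ 4 * S3 \<le> M" .
      have BM: "B \<le> M" using S1le S2M S3M by (simp add: B_def)
      have B0: "0 \<le> B" using S1ge[of 0] T_pos unfolding B_def
        by (smt (verit) atLeastAtMost_iff norm_ge_zero)
      have yB: "cmod (y eps t) \<le> B" if "t \<in> {0..T}" for t
        using S1ge[OF that] unfolding B_def by simp
      have R1: "1 \<le> R" using B0 by (simp add: R_def)
      have gK: "\<bar>gnl lam p \<rho>\<bar> \<le> K1" if "\<rho> \<in> {0..R\<^sup>2}" for \<rho>
      proof -
        have "bdd_above ((\<lambda>\<rho>. \<bar>gnl lam p \<rho>\<bar>) ` {0..R\<^sup>2})"
        proof (rule bdd_aboveI2)
          fix r assume r: "r \<in> {0..R\<^sup>2}"
          have "r ^ p \<le> (R\<^sup>2) ^ p" using r by (intro power_mono) auto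
          then show "\<bar>gnl lam p r\<bar> \<le> \<bar>lam\<bar> * (R\<^sup>2) ^ p"
            using r by (simp add: gnl_def abs_mult mult_left_mono)
        qed
        then show ?thesis unfolding K1_def using that by (intro cSUP_upper) auto
      qed
      have K0: "0 \<le> K1" using gK[of 0] by (simp add: gnl_def)
      have yt_bnd: "\<forall>s\<in>{0..\<tau>}. cmod (yt s) \<le> 2 * B + 4"
        by (rule bootstrap[OF eps(1) alpha_nonneg tau B0 K0 solt yn1 ydn1 _ small])
           (use gK R_def in auto)
      have tn0: "0 \<le> tn" using tau by (simp add: tn_def)
      have tnT: "tn + \<tau> \<le> T"
      proof -
        have "(real n + 1) * \<tau> \<le> (T / \<tau>) * \<tau>" using nT tau by (intro mult_right_mono) auto
        then show ?thesis using tau by (simp add: tn_def algebra_simps)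
      qed
      have solu: "solves_on eps \<alpha> lam p \<tau> (\<lambda>s. y eps (tn + s)) (\<lambda>s. yd eps (tn + s)) (\<lambda>s. ydd eps (tn + s))"
        using sol[OF eps] by (intro solves_shift[OF _ tn0 tnT]) auto
      define L where "L = \<bar>lam\<bar> * (1 + 2 * real p) * R ^ (2 * p + 1)"
      have L0: "0 \<le> L" using R1 by (simp add: L_def)
      have lip: "cmod (fnl lam p (y eps (tn + s)) - fnl lam p (yt s)) \<le> L * cmod (y eps (tn + s) - yt s)"
        if "s \<in> {0..\<tau>}" for s
        unfolding L_def
      proof (rule fnl_lip[OF _ _ R1])
        show "cmod (y eps (tn + s)) \<le> R" using yB[of "tn + s"] that tn0 tnT B0 by (simp add: R_def)
        show "cmod (yt s) \<le> R" using yt_bnd that by (simp add: R_def)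
      qed
      note G = energy_gronwall[OF eps(1) alpha_nonneg less_imp_le[OF tau] L0 solu solt lip]
      have LLm: "L \<le> Lm" unfolding L_def Lm_def using BM B0 R1
        by (intro mult_left_mono power_mono) (auto simp: R_def)
      have tT: "\<tau> \<le> T" using tnT tn0 by simp
      have E00: "0 \<le> energy eps \<alpha> (y eps tn - yn) (yd eps tn - ydn)"
        unfolding energy_def using alpha_nonneg eps by (intro add_nonneg_nonneg mult_nonneg_nonneg) auto
      show "\<bar>energy eps \<alpha> (y eps (tn + \<tau>) - yt \<tau>) (yd eps (tn + \<tau>) - ydt \<tau>) -
           energy eps \<alpha> (y eps tn - yn) (yd eps tn - ydn)\<bar>
           \<le> C * \<tau> * energy eps \<alpha> (y eps tn - yn) (yd eps tn - ydn)"
        using final_arith[OF E00 L0 less_imp_le[OF tau] LLm tT] G yt0 ydt0 unfolding C_def by simp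
    qed
  qed
qed

end
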